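(* Let $\Lambda\Subset\mathbb X$ and $x\in\mathbb X$. Then \[ \sum_{N\subset\Lambda}|\gamma(x,N)|\,\alpha^N=(1+\alpha(x)\mathbf 1_\Lambda(x))\sum_{N\subset\Lambda\setminus\{x\}}|\gamma(x,N)|\,\alpha^N, \] and \[ \sum_{N\subset\Lambda\setminus\{x\}}|\gamma(x,N)|\,\alpha^N\le\prod_{\substack{X\in\mathbf F(x):\\ X\setminus\{x\}\subset\Lambda}}\max\Big\{|W(X)|,\ 1+|W(X)-1|\alpha^S\ \Big|\ \varnothing\neq S\subset X\setminus\{x\}\Big\}. \]
   Context: $\mathbb X$ is a finite or countably infinite set, $X\Subset\mathbb X$ means finite subset, $\mathbf F$ is the set of finite subsets, $\mathbf F(x)=\{X\Subset\mathbb X\mid x\in X\}$. Fix $W:\mathbf F\to\mathbb C$, $r:\mathbb X\to[0,1)$, $\alpha=\frac r{1-r}$, $\alpha^S=\prod_{s\in S}\alpha(s)$. Conditional interaction: $W(X\mid B)=\prod_{C\subset B}W(X\cup C)$ if $X\cap B=\varnothing$, $0$ if $X=\{y\}$ with $y\in B$, $1$ otherwise; $\kappa(X\mid B)=\prod_{\varnothing\neq S\subset X}W(S\mid B)$ and $\kappa(x\mid B)=\kappa(\{x\}\mid B)$. Kernel: $\gamma(x,N)=\gamma(x,N\mid\varnothing)$ where $\gamma(x,N\mid B)=\sum_{M\subset N}(-1)^{|N\setminus M|}\kappa(x\mid B\cup M)$. A maximum $\max\{a,\ b_S\mid S\in\mathcal S\}$ denotes the maximum of $a$ and all $b_S$ (equal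 to $a$ if $\mathcal S=\varnothing$). *)

theory Defs
  imports "HOL-Analysis.Analysis"
begin

text \<open>The ground set \<open>\<bbbX>\<close> is a countable type \<open>'a::countable\<close>;
  W is given on all sets but only its values on finite sets matter.\<close>

definition alpha :: "('a \<Rightarrow> real) \<Rightarrow> 'a \<Rightarrow> real" where
  "alpha r s = r s / (1 - r s)"

definition alpha_pow :: "('a \<Rightarrow> real) \<Rightarrow> 'a set \<Rightarrow> real" where
  "alpha_pow r S = (\<Prod>s\<in>S. alpha r s)"

definition condW :: "('a set \<Rightarrow> complex) \<Rightarrow> 'a set \<Rightarrow> 'a set \<Rightarrow> complex" where
  "condW W X B =
     (if X \<inter> B = {} then (\<Prod>C\<in>Pow B. W (X \<union> C))
      else if (\<exists>y. X = {y} \<and> y \<in> B) then 0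
      else 1)"

definition kappa :: "('a set \<Rightarrow> complex) \<Rightarrow> 'a set \<Rightarrow> 'a set \<Rightarrow> complex" where
  "kappa W X B = (\<Prod>S\<in>Pow X - {{}}. condW W S B)"

definition gammaB :: "('a set \<Rightarrow> complex) \<Rightarrow> 'a \<Rightarrow> 'a set \<Rightarrow> 'a set \<Rightarrow> complex" where
  "gammaB W x N B = (\<Sum>M\<in>Pow N. (-1) ^ card (N - M) * kappa W {x} (B \<union> M))"

definition gamma :: "('a set \<Rightarrow> complex) \<Rightarrow> 'a \<Rightarrow> 'a set \<Rightarrow> complex" where
  "gamma W x N = gammaB W x N {}"

end

theory Submission imports Defs begin

definition mob :: "('a set \<Rightarrow> complex) \<Rightarrow> 'a set \<Rightarrow> complex" where
  "mob \<Phi> N = (\<Sum>M\<in>Pow N. (-1) ^ card (N - M) * \<Phi> M)"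

definition zeta :: "('a set \<Rightarrow> complex) \<Rightarrow> 'a set \<Rightarrow> complex" where
  "zeta h M = (\<Sum>K\<in>Pow M. h K)"

lemma mob_cong: "(\<And>M. M \<subseteq> N \<Longrightarrow> \<Phi> M = \<Psi> M) \<Longrightarrow> mob \<Phi> N = mob \<Psi> N"
  unfolding mob_def by (intro sum.cong) auto

lemma mob_add: "mob (\<lambda>M. \<Phi> M + \<Psi> M) N = mob \<Phi> N + mob \<Psi> N"
  unfolding mob_def by (simp add: algebra_simps sum.distrib)

lemma inj_insert_Pow: "y \<notin> N \<Longrightarrow> inj_on (insert y) (Pow N)"
  unfolding inj_on_def by (metis Pow_iff insert_ident subsetD)

lemma sum_Pow_insert:
  fixes F :: "'a set \<Rightarrow> 'b::comm_monoid_add"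
  assumes "finite N" "y \<notin> N"
  shows "(\<Sum>M\<in>Pow (insert y N). F M) = (\<Sum>M\<in>Pow N. F M) + (\<Sum>M\<in>Pow N. F (insert y M))"
proof -
  have disj: "Pow N \<inter> insert y ` Pow N = {}" using assms(2) by auto
  have "(\<Sum>M\<in>Pow (insert y N). F M) = (\<Sum>M\<in>Pow N. F M) + (\<Sum>M\<in>insert y ` Pow N. F M)"
    unfolding Pow_insert by (rule sum.union_disjoint) (use assms disj in auto)
  also have "(\<Sum>M\<in>insert y ` Pow N. F M) = (\<Sum>M\<in>Pow N. F (insert y M))"
    by (simp add: sum.reindex[OF inj_insert_Pow[OF assms(2)]])
  finally show ?thesis .
qed

lemma mob_insert:
  assumes "finite N" "y \<notin> N"
  shows "mob \<Phi> (insert y N) = mob (\<lambda>M. \<Phi> (insert y M)) N - mob \<Phi> N"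
proof -
  have "mob \<Phi> (insert y N) = (\<Sum>M\<in>Pow N. (-1) ^ card (insert y N - M) * \<Phi> M)
      + (\<Sum>M\<in>Pow N. (-1) ^ card (insert y N - insert y M) * \<Phi> (insert y M))"
    unfolding mob_def by (rule sum_Pow_insert[OF assms])
  also have "(\<Sum>M\<in>Pow N. (-1) ^ card (insert y N - insert y M) * \<Phi> (insert y M))
     = mob (\<lambda>M. \<Phi> (insert y M)) N"
    unfolding mob_def
  proof (intro sum.cong refl)
    fix M assume "M \<in> Pow N"
    then have "insert y N - insert y M = N - M" using assms(2) by auto
    then show "(-1) ^ card (insert y N - insert y M) * \<Phi> (insert y M) = (-1) ^ card (N - M) * \<Phi> (insert y M)"
      by simp
  qed
  also have "(\<Sum>M\<in>Pow N. (-1) ^ card (insert y N - M) * \<Phi> M) = - mob \<Phi> N"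
    unfolding mob_def sum_negf[symmetric]
  proof (intro sum.cong refl)
    fix M assume "M \<in> Pow N"
    then have "insert y N - M = insert y (N - M)" "y \<notin> N - M" "finite (N - M)" using assms by auto
    then show "(-1) ^ card (insert y N - M) * \<Phi> M = - ((-1) ^ card (N - M) * \<Phi> M)"
      by simp
  qed
  finally show ?thesis by simp
qed

lemma zeta_insert:
  assumes "finite M" "y \<notin> M"
  shows "zeta h (insert y M) = zeta h M + zeta (\<lambda>K. h (insert y K)) M"
  unfolding zeta_def by (rule sum_Pow_insert[OF assms])

lemma zeta_mob: "finite M \<Longrightarrow> zeta (mob \<Phi>) M = \<Phi> M"
proof (induction M arbitrary: \<Phi> rule: finite_induct)
  case empty
  then show ?case by (simp add: zeta_def mob_def)
next
  case (insert y M)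
  have "zeta (mob \<Phi>) (insert y M) = zeta (mob \<Phi>) M + (\<Sum>K\<in>Pow M. mob \<Phi> (insert y K))"
    using zeta_insert[OF insert(1,2)] by (simp add: zeta_def)
  also have "(\<Sum>K\<in>Pow M. mob \<Phi> (insert y K)) = (\<Sum>K\<in>Pow M. mob (\<lambda>L. \<Phi> (insert y L)) K - mob \<Phi> K)"
  proof (intro sum.cong refl)
    fix K assume "K \<in> Pow M"
    then have "finite K" "y \<notin> K" using insert(1,2) finite_subset by auto
    then show "mob \<Phi> (insert y K) = mob (\<lambda>L. \<Phi> (insert y L)) K - mob \<Phi> K" by (rule mob_insert)
  qed
  also have "\<dots> = zeta (mob (\<lambda>L. \<Phi> (insert y L))) M - zeta (mob \<Phi>) M"
    by (simp add: zeta_def sum_subtractf)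
  finally show ?case using insert(3) by simp
qed

lemma mob_zeta: "finite N \<Longrightarrow> mob (zeta h) N = h N"
proof (induction N arbitrary: h rule: finite_induct)
  case empty
  then show ?case by (simp add: zeta_def mob_def)
next
  case (insert y N)
  have "mob (zeta h) (insert y N) = mob (\<lambda>M. zeta h (insert y M)) N - mob (zeta h) N"
    by (rule mob_insert[OF insert(1,2)])
  also have "mob (\<lambda>M. zeta h (insert y M)) N = mob (\<lambda>M. zeta h M + zeta (\<lambda>K. h (insert y K)) M) N"
  proof (rule mob_cong)
    fix M assume "M \<subseteq> N"
    then have "finite M" "y \<notin> M" using insert(1,2) finite_subset by auto
    then show "zeta h (insert y M) = zeta h M + zeta (\<lambda>K. h (insert y K)) M" by (rule zeta_insert)
  qed
  also have "\<dots> = h N + h (insert y N)" by (simp add: mob_add insert(3))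
  finally show ?case by (simp add: insert(3))
qed


lemma sum_Pow_split:
  fixes F :: "'a set \<Rightarrow> 'b::comm_monoid_add"
  assumes "D \<subseteq> M" "finite M"
  shows "(\<Sum>K\<in>Pow M. F K) = (\<Sum>A\<in>Pow (M - D). \<Sum>B\<in>Pow D. F (A \<union> B))"
proof -
  have fD: "finite D" using assms finite_subset by auto
  have bij: "bij_betw (\<lambda>(A, B). A \<union> B) (Pow (M - D) \<times> Pow D) (Pow M)"
    by (rule bij_betwI[where g = "\<lambda>K. (K - D, K \<inter> D)"]) (use assms in auto)
  have "(\<Sum>A\<in>Pow (M - D). \<Sum>B\<in>Pow D. F (A \<union> B)) = (\<Sum>(A, B)\<in>Pow (M - D) \<times> Pow D. F (A \<union> B))"
    by (rule sum.cartesian_product)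
  also have "\<dots> = (\<Sum>K\<in>Pow M. F K)"
    using sum.reindex_bij_betw[OF bij, of F] by (simp add: case_prod_unfold)
  finally show ?thesis by simp
qed

lemma mob_key:
  assumes "finite N" "finite D"
  shows "mob (\<lambda>M. \<Phi> M * (if D \<subseteq> M then c else 1)) N
     = mob \<Phi> N + (if D \<subseteq> N then (c - 1) * (\<Sum>B\<in>Pow D. mob \<Phi> ((N - D) \<union> B)) else 0)"
proof -
  define h where "h N = mob \<Phi> N + (if D \<subseteq> N then (c - 1) * (\<Sum>B\<in>Pow D. mob \<Phi> ((N - D) \<union> B)) else 0)" for N
  have zh: "zeta h M = \<Phi> M * (if D \<subseteq> M then c else 1)" if fM: "finite M" for M
  proof -
    have "zeta h M = zeta (mob \<Phi>) M + (\<Sum>K\<in>Pow M. (if D \<subseteq> K then (c - 1) * (\<Sum>B\<in>Pow D. mob \<Phi> ((K - D) \<union> B)) else 0))"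
      unfolding zeta_def h_def by (simp add: sum.distrib)
    also have "zeta (mob \<Phi>) M = \<Phi> M" by (rule zeta_mob[OF fM])
    also have "(\<Sum>K\<in>Pow M. (if D \<subseteq> K then (c - 1) * (\<Sum>B\<in>Pow D. mob \<Phi> ((K - D) \<union> B)) else 0))
        = (if D \<subseteq> M then (c - 1) * \<Phi> M else 0)"
    proof (cases "D \<subseteq> M")
      case True
      have "(\<Sum>K\<in>Pow M. (if D \<subseteq> K then (c - 1) * (\<Sum>B\<in>Pow D. mob \<Phi> ((K - D) \<union> B)) else 0))
          = (\<Sum>A\<in>Pow (M - D). \<Sum>B'\<in>Pow D. (if D \<subseteq> A \<union> B' then (c - 1) * (\<Sum>B\<in>Pow D. mob \<Phi> (((A \<union> B') - D) \<union> B)) else 0))"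
        by (rule sum_Pow_split[OF True fM])
      also have "\<dots> = (\<Sum>A\<in>Pow (M - D). (c - 1) * (\<Sum>B\<in>Pow D. mob \<Phi> (A \<union> B)))"
      proof (intro sum.cong refl)
        fix A assume A: "A \<in> Pow (M - D)"
        have "(\<Sum>B'\<in>Pow D. (if D \<subseteq> A \<union> B' then (c - 1) * (\<Sum>B\<in>Pow D. mob \<Phi> (((A \<union> B') - D) \<union> B)) else 0))
            = (\<Sum>B'\<in>Pow D. (if B' = D then (c - 1) * (\<Sum>B\<in>Pow D. mob \<Phi> (A \<union> B)) else 0))"
        proof (intro sum.cong refl)
          fix B' assume "B' \<in> Pow D"
          then have "(D \<subseteq> A \<union> B') = (B' = D)" using A by auto
          moreover have "B' = D \<Longrightarrow> (A \<union> B') - D = A" using A by auto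
          ultimately show "(if D \<subseteq> A \<union> B' then (c - 1) * (\<Sum>B\<in>Pow D. mob \<Phi> (((A \<union> B') - D) \<union> B)) else 0)
            = (if B' = D then (c - 1) * (\<Sum>B\<in>Pow D. mob \<Phi> (A \<union> B)) else 0)" by simp
        qed
        also have "\<dots> = (c - 1) * (\<Sum>B\<in>Pow D. mob \<Phi> (A \<union> B))"
          using assms(2) by (simp add: sum.delta')
        finally show "(\<Sum>B'\<in>Pow D. (if D \<subseteq> A \<union> B' then (c - 1) * (\<Sum>B\<in>Pow D. mob \<Phi> (((A \<union> B') - D) \<union> B)) else 0))
            = (c - 1) * (\<Sum>B\<in>Pow D. mob \<Phi> (A \<union> B))" .
      qed
      also have "\<dots> = (c - 1) * (\<Sum>K\<in>Pow M. mob \<Phi> K)"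
        by (simp add: sum_distrib_left sum_Pow_split[OF True fM])
      also have "(\<Sum>K\<in>Pow M. mob \<Phi> K) = \<Phi> M" using zeta_mob[OF fM] by (simp add: zeta_def)
      finally show ?thesis using True by simp
    next
      case False
      then have "\<And>K. K \<in> Pow M \<Longrightarrow> \<not> D \<subseteq> K" by auto
      then show ?thesis using False by simp
    qed
    finally show ?thesis by (simp add: algebra_simps)
  qed
  have "mob (\<lambda>M. \<Phi> M * (if D \<subseteq> M then c else 1)) N = mob (zeta h) N"
    by (rule mob_cong) (use zh assms(1) finite_subset in metis)
  also have "\<dots> = h N" by (rule mob_zeta[OF assms(1)])
  finally show ?thesis by (simp add: h_def)
qed


lemma alpha_pow_union:
  "finite A \<Longrightarrow> finite B \<Longrightarrow> A \<inter> B = {} \<Longrightarrow> alpha_pow r (A \<union> B) = alpha_pow r A * alpha_pow r B"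
  unfolding alpha_pow_def by (rule prod.union_disjoint)

lemma alpha_pow_nonneg: "(\<And>s. 0 \<le> alpha r s) \<Longrightarrow> 0 \<le> alpha_pow r A"
  unfolding alpha_pow_def by (rule prod_nonneg) auto

lemma ineq_step:
  fixes \<gamma> :: "'a set \<Rightarrow> complex"
  assumes fL: "finite L" and DL: "D \<subseteq> L" and apos: "\<And>s. 0 \<le> alpha r s"
    and mc: "cmod c \<le> mv"
    and mS: "\<And>S. S \<noteq> {} \<Longrightarrow> S \<subseteq> D \<Longrightarrow> 1 + cmod (c - 1) * alpha_pow r S \<le> mv"
  shows "(\<Sum>N\<in>Pow L. cmod (\<gamma> N + (if D \<subseteq> N then (c - 1) * (\<Sum>B\<in>Pow D. \<gamma> ((N - D) \<union> B)) else 0)) * alpha_pow r N)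
     \<le> mv * (\<Sum>N\<in>Pow L. cmod (\<gamma> N) * alpha_pow r N)"
proof -
  have fD: "finite D" using fL DL finite_subset by auto
  let ?G = "\<lambda>N. cmod (\<gamma> N + (if D \<subseteq> N then (c - 1) * (\<Sum>B\<in>Pow D. \<gamma> ((N - D) \<union> B)) else 0)) * alpha_pow r N"
  let ?H = "\<lambda>N. cmod (\<gamma> N) * alpha_pow r N"
  have per: "(\<Sum>B\<in>Pow D. ?G (A \<union> B)) \<le> mv * (\<Sum>B\<in>Pow D. ?H (A \<union> B))" if A: "A \<in> Pow (L - D)" for A
  proof -
    have fA: "finite A" using A fL finite_subset by auto
    have AD: "A \<inter> D = {}" using A by auto
    have DD: "D \<in> Pow D" by simp
    have fPD: "finite (Pow D - {D})" using fD by simp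
    have eqB: "?G (A \<union> B) = ?H (A \<union> B)" if "B \<in> Pow D - {D}" for B
    proof -
      have "\<not> D \<subseteq> A \<union> B" using that AD by auto
      then show ?thesis by simp
    qed
    have aAD: "alpha_pow r (A \<union> D) = alpha_pow r (A \<union> B) * alpha_pow r (D - B)" if "B \<in> Pow D" for B
    proof -
      have "A \<union> D = (A \<union> B) \<union> (D - B)" using that by auto
      moreover have "finite (A \<union> B)" "finite (D - B)" using fA fD that finite_subset by auto
      moreover have "(A \<union> B) \<inter> (D - B) = {}" using AD by auto
      ultimately show ?thesis using alpha_pow_union by metis
    qed
    have g1: "\<gamma> (A \<union> D) + (c - 1) * (\<Sum>B\<in>Pow D. \<gamma> (A \<union> B))
        = c * \<gamma> (A \<union> D) + (c - 1) * (\<Sum>B\<in>Pow D - {D}. \<gamma> (A \<union> B))"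
      using sum.remove[OF _ DD, of "\<lambda>B. \<gamma> (A \<union> B)"] fD by (simp add: algebra_simps)
    have GD: "?G (A \<union> D) = cmod (c * \<gamma> (A \<union> D) + (c - 1) * (\<Sum>B\<in>Pow D - {D}. \<gamma> (A \<union> B))) * alpha_pow r (A \<union> D)"
    proof -
      have "(A \<union> D) - D = A" using AD by auto
      then show ?thesis using g1 by simp
    qed
    have an: "0 \<le> alpha_pow r X" for X using alpha_pow_nonneg apos by blast
    have "cmod (c * \<gamma> (A \<union> D) + (c - 1) * (\<Sum>B\<in>Pow D - {D}. \<gamma> (A \<union> B)))
        \<le> cmod c * cmod (\<gamma> (A \<union> D)) + (\<Sum>B\<in>Pow D - {D}. cmod (c - 1) * cmod (\<gamma> (A \<union> B)))"
    proof -
      have "cmod (c * \<gamma> (A \<union> D) + (c - 1) * (\<Sum>B\<in>Pow D - {D}. \<gamma> (A \<union> B)))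
          \<le> cmod (c * \<gamma> (A \<union> D)) + cmod ((c - 1) * (\<Sum>B\<in>Pow D - {D}. \<gamma> (A \<union> B)))"
        by (rule norm_triangle_ineq)
      also have "cmod ((c - 1) * (\<Sum>B\<in>Pow D - {D}. \<gamma> (A \<union> B))) \<le> cmod (c - 1) * (\<Sum>B\<in>Pow D - {D}. cmod (\<gamma> (A \<union> B)))"
        by (simp add: norm_mult mult_left_mono norm_sum)
      finally show ?thesis by (simp add: norm_mult sum_distrib_left)
    qed
    then have "?G (A \<union> D) \<le> (cmod c * cmod (\<gamma> (A \<union> D)) + (\<Sum>B\<in>Pow D - {D}. cmod (c - 1) * cmod (\<gamma> (A \<union> B)))) * alpha_pow r (A \<union> D)"
      unfolding GD by (rule mult_right_mono) (rule an)
    also have "\<dots> = cmod c * ?H (A \<union> D) + (\<Sum>B\<in>Pow D - {D}. cmod (c - 1) * alpha_pow r (D - B) * ?H (A \<union> B))"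
    proof -
      have "alpha_pow r (A \<union> D) * (\<Sum>B\<in>Pow D - {D}. cmod (c - 1) * cmod (\<gamma> (A \<union> B)))
          = (\<Sum>B\<in>Pow D - {D}. cmod (c - 1) * alpha_pow r (D - B) * ?H (A \<union> B))"
        unfolding sum_distrib_left
      proof (intro sum.cong refl)
        fix B assume "B \<in> Pow D - {D}"
        then show "alpha_pow r (A \<union> D) * (cmod (c - 1) * cmod (\<gamma> (A \<union> B))) = cmod (c - 1) * alpha_pow r (D - B) * ?H (A \<union> B)"
          using aAD[of B] by simp
      qed
      then show ?thesis by (simp add: algebra_simps)
    qed
    finally have GDle: "?G (A \<union> D) \<le> cmod c * ?H (A \<union> D) + (\<Sum>B\<in>Pow D - {D}. cmod (c - 1) * alpha_pow r (D - B) * ?H (A \<union> B))" .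
    have "(\<Sum>B\<in>Pow D. ?G (A \<union> B)) = ?G (A \<union> D) + (\<Sum>B\<in>Pow D - {D}. ?G (A \<union> B))"
      using sum.remove[OF _ DD, of "\<lambda>B. ?G (A \<union> B)"] fD by blast
    also have "(\<Sum>B\<in>Pow D - {D}. ?G (A \<union> B)) = (\<Sum>B\<in>Pow D - {D}. ?H (A \<union> B))"
      using eqB by (rule sum.cong[OF refl])
    also have "?G (A \<union> D) + (\<Sum>B\<in>Pow D - {D}. ?H (A \<union> B))
        \<le> cmod c * ?H (A \<union> D) + (\<Sum>B\<in>Pow D - {D}. (1 + cmod (c - 1) * alpha_pow r (D - B)) * ?H (A \<union> B))"
      using GDle by (simp add: algebra_simps sum.distrib)
    also have "\<dots> \<le> mv * ?H (A \<union> D) + (\<Sum>B\<in>Pow D - {D}. mv * ?H (A \<union> B))"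
    proof (rule add_mono)
      show "cmod c * ?H (A \<union> D) \<le> mv * ?H (A \<union> D)" using mc an by (intro mult_right_mono) auto
      show "(\<Sum>B\<in>Pow D - {D}. (1 + cmod (c - 1) * alpha_pow r (D - B)) * ?H (A \<union> B)) \<le> (\<Sum>B\<in>Pow D - {D}. mv * ?H (A \<union> B))"
      proof (rule sum_mono)
        fix B assume B: "B \<in> Pow D - {D}"
        then have "D - B \<noteq> {}" "D - B \<subseteq> D" by auto
        then have "1 + cmod (c - 1) * alpha_pow r (D - B) \<le> mv" by (rule mS)
        then show "(1 + cmod (c - 1) * alpha_pow r (D - B)) * ?H (A \<union> B) \<le> mv * ?H (A \<union> B)"
          using an by (intro mult_right_mono) auto
      qed
    qed
    also have "\<dots> = mv * (\<Sum>B\<in>Pow D. ?H (A \<union> B))"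
      using sum.remove[OF _ DD, of "\<lambda>B. ?H (A \<union> B)"] fD by (simp add: sum_distrib_left algebra_simps)
    finally show ?thesis .
  qed
  have "(\<Sum>N\<in>Pow L. ?G N) = (\<Sum>A\<in>Pow (L - D). \<Sum>B\<in>Pow D. ?G (A \<union> B))"
    by (rule sum_Pow_split[OF DL fL])
  also have "\<dots> \<le> (\<Sum>A\<in>Pow (L - D). mv * (\<Sum>B\<in>Pow D. ?H (A \<union> B)))"
    by (rule sum_mono) (rule per)
  also have "\<dots> = mv * (\<Sum>N\<in>Pow L. ?H N)"
    by (simp add: sum_distrib_left sum_Pow_split[OF DL fL])
  finally show ?thesis .
qed


definition PhiF :: "('a set \<Rightarrow> complex) \<Rightarrow> 'a set set \<Rightarrow> 'a set \<Rightarrow> complex" where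
  "PhiF f CC M = (\<Prod>C\<in>CC. if C \<subseteq> M then f C else 1)"

definition mval :: "('a set \<Rightarrow> complex) \<Rightarrow> ('a \<Rightarrow> real) \<Rightarrow> 'a set \<Rightarrow> real" where
  "mval f r C = Max (insert (cmod (f C)) {1 + cmod (f C - 1) * alpha_pow r S | S. S \<noteq> {} \<and> S \<subseteq> C})"

lemma mval_props:
  assumes "finite C"
  shows "cmod (f C) \<le> mval f r C" "\<And>S. S \<noteq> {} \<Longrightarrow> S \<subseteq> C \<Longrightarrow> 1 + cmod (f C - 1) * alpha_pow r S \<le> mval f r C"
proof -
  have "{1 + cmod (f C - 1) * alpha_pow r S | S. S \<noteq> {} \<and> S \<subseteq> C} \<subseteq> (\<lambda>S. 1 + cmod (f C - 1) * alpha_pow r S) ` Pow C"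
    by auto
  then have fin: "finite (insert (cmod (f C)) {1 + cmod (f C - 1) * alpha_pow r S | S. S \<noteq> {} \<and> S \<subseteq> C})"
    using assms finite_subset by blast
  show "cmod (f C) \<le> mval f r C" unfolding mval_def by (rule Max_ge[OF fin]) simp
  show "\<And>S. S \<noteq> {} \<Longrightarrow> S \<subseteq> C \<Longrightarrow> 1 + cmod (f C - 1) * alpha_pow r S \<le> mval f r C"
    unfolding mval_def by (rule Max_ge[OF fin]) blast
qed

lemma main_bound:
  assumes fL: "finite L" and apos: "\<And>s. 0 \<le> alpha r s"
  shows "finite CC \<Longrightarrow> CC \<subseteq> Pow L \<Longrightarrow>
    (\<Sum>N\<in>Pow L. cmod (mob (PhiF f CC) N) * alpha_pow r N) \<le> (\<Prod>C\<in>CC. mval f r C)"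
proof (induction CC rule: finite_induct)
  case empty
  have mb: "mob (PhiF f {}) N = (if N = {} then 1 else 0)" if "N \<in> Pow L" for N
  proof -
    have fN: "finite N" using that fL finite_subset by auto
    have "mob (PhiF f {}) N = mob (zeta (\<lambda>K. if K = {} then 1 else 0)) N"
    proof (rule mob_cong)
      fix M assume "M \<subseteq> N"
      then have "finite M" using fN finite_subset by auto
      then show "PhiF f {} M = zeta (\<lambda>K. if K = {} then 1 else 0) M"
        by (simp add: PhiF_def zeta_def sum.delta')
    qed
    also have "\<dots> = (if N = {} then 1 else 0)" by (rule mob_zeta[OF fN])
    finally show ?thesis .
  qed
  then have "(\<Sum>N\<in>Pow L. cmod (mob (PhiF f {}) N) * alpha_pow r N) = (\<Sum>N\<in>Pow L. if N = {} then 1 else 0)"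
    by (intro sum.cong refl) (simp add: alpha_pow_def)
  also have "\<dots> = 1" using fL by (simp add: sum.delta')
  finally show ?case by simp
next
  case (insert D CC)
  have DL: "D \<subseteq> L" and CCL: "CC \<subseteq> Pow L" using insert(4) by auto
  have fD: "finite D" using DL fL finite_subset by auto
  have "(\<Sum>N\<in>Pow L. cmod (mob (PhiF f (insert D CC)) N) * alpha_pow r N)
      = (\<Sum>N\<in>Pow L. cmod (mob (PhiF f CC) N + (if D \<subseteq> N then (f D - 1) * (\<Sum>B\<in>Pow D. mob (PhiF f CC) ((N - D) \<union> B)) else 0)) * alpha_pow r N)"
  proof (intro sum.cong refl)
    fix N assume "N \<in> Pow L"
    then have fN: "finite N" using fL finite_subset by auto
    have "PhiF f (insert D CC) = (\<lambda>M. PhiF f CC M * (if D \<subseteq> M then f D else 1))"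
      using insert(1,2) by (auto simp: PhiF_def fun_eq_iff mult.commute)
    then show "cmod (mob (PhiF f (insert D CC)) N) * alpha_pow r N = cmod (mob (PhiF f CC) N + (if D \<subseteq> N then (f D - 1) * (\<Sum>B\<in>Pow D. mob (PhiF f CC) ((N - D) \<union> B)) else 0)) * alpha_pow r N"
      using mob_key[OF fN fD, of "PhiF f CC" "f D"] by simp
  qed
  also have "\<dots> \<le> mval f r D * (\<Sum>N\<in>Pow L. cmod (mob (PhiF f CC) N) * alpha_pow r N)"
    by (rule ineq_step[OF fL DL apos mval_props(1)[OF fD] mval_props(2)[OF fD]])
  also have "\<dots> \<le> mval f r D * (\<Prod>C\<in>CC. mval f r C)"
  proof (rule mult_left_mono)
    show "(\<Sum>N\<in>Pow L. cmod (mob (PhiF f CC) N) * alpha_pow r N) \<le> (\<Prod>C\<in>CC. mval f r C)"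
      by (rule insert(3)[OF CCL])
    show "0 \<le> mval f r D" using mval_props(1)[OF fD, of f r] norm_ge_zero order_trans by blast
  qed
  also have "\<dots> = (\<Prod>C\<in>insert D CC. mval f r C)" using insert(1,2) by simp
  finally show ?case .
qed


lemma kappa_x: "kappa W {x} M = (if x \<in> M then 0 else (\<Prod>C\<in>Pow M. W (insert x C)))"
proof -
  have "Pow {x} - {{}} = {{x}}" by auto
  then show ?thesis unfolding kappa_def condW_def by auto
qed

lemma gamma_mob: "gamma W x N = mob (kappa W {x}) N"
  unfolding gamma_def gammaB_def mob_def by simp

theorem corollary6p5:
  fixes W :: "('a::countable) set \<Rightarrow> complex"
    and r :: "'a \<Rightarrow> real"
    and \<Lambda> :: "'a set"
    and x :: 'a
  assumes r_range: "\<And>s. 0 \<le> r s \<and> r s < 1"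
    and fin: "finite \<Lambda>"
  shows "((\<Sum>N\<in>Pow \<Lambda>. cmod (gamma W x N) * alpha_pow r N)
           = (1 + alpha r x * of_bool (x \<in> \<Lambda>))
             * (\<Sum>N\<in>Pow (\<Lambda> - {x}). cmod (gamma W x N) * alpha_pow r N))
       \<and> ((\<Sum>N\<in>Pow (\<Lambda> - {x}). cmod (gamma W x N) * alpha_pow r N)
           \<le> (\<Prod>X\<in>{X. finite X \<and> x \<in> X \<and> X - {x} \<subseteq> \<Lambda>}.
                 Max (insert (cmod (W X))
                   {1 + cmod (W X - 1) * alpha_pow r S | S. S \<noteq> {} \<and> S \<subseteq> X - {x}})))"
proof
  define L where "L = \<Lambda> - {x}"
  have fL: "finite L" using fin by (simp add: L_def)
  have xL: "x \<notin> L" by (simp add: L_def)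
  have apos: "0 \<le> alpha r s" for s
    using r_range[of s] by (simp add: alpha_def)
  show "(\<Sum>N\<in>Pow \<Lambda>. cmod (gamma W x N) * alpha_pow r N)
           = (1 + alpha r x * of_bool (x \<in> \<Lambda>))
             * (\<Sum>N\<in>Pow (\<Lambda> - {x}). cmod (gamma W x N) * alpha_pow r N)"
  proof (cases "x \<in> \<Lambda>")
    case False
    then show ?thesis by simp
  next
    case True
    have LL: "\<Lambda> = insert x L" using True by (auto simp: L_def)
    have "(\<Sum>N\<in>Pow \<Lambda>. cmod (gamma W x N) * alpha_pow r N)
       = (\<Sum>N\<in>Pow L. cmod (gamma W x N) * alpha_pow r N) + (\<Sum>N\<in>Pow L. cmod (gamma W x (insert x N)) * alpha_pow r (insert x N))"
      unfolding LL by (rule sum_Pow_insert[OF fL xL])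
    also have "(\<Sum>N\<in>Pow L. cmod (gamma W x (insert x N)) * alpha_pow r (insert x N))
        = alpha r x * (\<Sum>N\<in>Pow L. cmod (gamma W x N) * alpha_pow r N)"
      unfolding sum_distrib_left
    proof (intro sum.cong refl)
      fix N assume N: "N \<in> Pow L"
      then have fN: "finite N" and xN: "x \<notin> N" using fL xL finite_subset by auto
      have "gamma W x (insert x N) = mob (\<lambda>M. kappa W {x} (insert x M)) N - gamma W x N"
        unfolding gamma_mob by (rule mob_insert[OF fN xN])
      also have "mob (\<lambda>M. kappa W {x} (insert x M)) N = 0"
        unfolding mob_def by (simp add: kappa_x)
      finally have "cmod (gamma W x (insert x N)) = cmod (gamma W x N)" by simp
      moreover have "alpha_pow r (insert x N) = alpha r x * alpha_pow r N"
        unfolding alpha_pow_def using fN xN by simp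
      ultimately show "cmod (gamma W x (insert x N)) * alpha_pow r (insert x N) = alpha r x * (cmod (gamma W x N) * alpha_pow r N)"
        by simp
    qed
    finally show ?thesis using True by (simp add: L_def algebra_simps)
  qed
  define f where "f C = W (insert x C)" for C
  have "(\<Sum>N\<in>Pow (\<Lambda> - {x}). cmod (gamma W x N) * alpha_pow r N)
      = (\<Sum>N\<in>Pow L. cmod (mob (PhiF f (Pow L)) N) * alpha_pow r N)"
    unfolding L_def[symmetric]
  proof (intro sum.cong refl)
    fix N assume N: "N \<in> Pow L"
    have "gamma W x N = mob (PhiF f (Pow L)) N"
      unfolding gamma_mob
    proof (rule mob_cong)
      fix M assume "M \<subseteq> N"
      then have hML: "M \<subseteq> L" using N by auto
      then have xM: "x \<notin> M" using xL by auto
      have "PhiF f (Pow L) M = (\<Prod>C\<in>{C\<in>Pow L. C \<subseteq> M}. f C)"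
        unfolding PhiF_def by (rule prod.inter_filter[symmetric]) (simp add: fL)
      also have "{C\<in>Pow L. C \<subseteq> M} = Pow M" using hML by auto
      finally have eq: "PhiF f (Pow L) M = (\<Prod>C\<in>Pow M. f C)" .
      show "kappa W {x} M = PhiF f (Pow L) M" unfolding eq using xM by (simp add: kappa_x f_def)
    qed
    then show "cmod (gamma W x N) * alpha_pow r N = cmod (mob (PhiF f (Pow L)) N) * alpha_pow r N" by simp
  qed
  also have "\<dots> \<le> (\<Prod>C\<in>Pow L. mval f r C)"
    by (rule main_bound[OF fL apos]) (use fL in auto)
  also have "\<dots> = (\<Prod>X\<in>{X. finite X \<and> x \<in> X \<and> X - {x} \<subseteq> \<Lambda>}.
                 Max (insert (cmod (W X))
                   {1 + cmod (W X - 1) * alpha_pow r S | S. S \<noteq> {} \<and> S \<subseteq> X - {x}}))"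
  proof -
    have set: "{X. finite X \<and> x \<in> X \<and> X - {x} \<subseteq> \<Lambda>} = insert x ` Pow L"
    proof
      show "{X. finite X \<and> x \<in> X \<and> X - {x} \<subseteq> \<Lambda>} \<subseteq> insert x ` Pow L"
      proof
        fix X assume "X \<in> {X. finite X \<and> x \<in> X \<and> X - {x} \<subseteq> \<Lambda>}"
        then have "X = insert x (X - {x})" "X - {x} \<in> Pow L" by (auto simp: L_def)
        then show "X \<in> insert x ` Pow L" by blast
      qed
      show "insert x ` Pow L \<subseteq> {X. finite X \<and> x \<in> X \<and> X - {x} \<subseteq> \<Lambda>}"
        using fL finite_subset by (auto simp: L_def)
    qed
    show ?thesis unfolding set prod.reindex[OF inj_insert_Pow[OF xL]] o_def
    proof (intro prod.cong refl)
      fix C assume "C \<in> Pow L"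
      then have "insert x C - {x} = C" using xL by auto
      then show "mval f r C = Max (insert (cmod (W (insert x C)))
                   {1 + cmod (W (insert x C) - 1) * alpha_pow r S | S. S \<noteq> {} \<and> S \<subseteq> insert x C - {x}})"
        by (simp add: mval_def f_def)
    qed
  qed
  finally show "(\<Sum>N\<in>Pow (\<Lambda> - {x}). cmod (gamma W x N) * alpha_pow r N)
           \<le> (\<Prod>X\<in>{X. finite X \<and> x \<in> X \<and> X - {x} \<subseteq> \<Lambda>}.
                 Max (insert (cmod (W X))
                   {1 + cmod (W X - 1) * alpha_pow r S | S. S \<noteq> {} \<and> S \<subseteq> X - {x}}))" .
qed

end
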